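(* Let $\Upsilon$ be a tree and let $\|\cdot\|$ be an equivalent strictly convex norm on $C_0(\Upsilon)$, with associated function $\mu(t)=\inf\{\|\mathbf{1}_{(0,t]}+f'\|: f'\in C_0(\Upsilon),\ \operatorname{supp}f'\subseteq(t,\infty)\}$. Then for every $s\in\Upsilon$ there is at most one point $t$ which is bad for $\mu$ and satisfies $s\preceq t$ and $\mu(t)=\mu(s)$. In particular, $\mu$ is strictly increasing on the set of its bad points.
   Context: A tree is a partially ordered set $(\Upsilon,\preceq)$ such that for each $t$ the set $(0,t]=\{s:s\preceq t\}$ is well-ordered; write $(0,t)=\{s:s\prec t\}$, $(t,\infty)=\{u:t\prec u\}$, and let $r(t)$ be the order type of $(0,t)$. Trees are assumed Hausdorff: if $r(t)$ is a limit ordinal and $(0,t)=(0,t')$ then $t=t'$. $\Upsilon$ carries the coarsest topology in which every $(0,t]$ is open and closed, and $C_0(\Upsilon)$ is the space of continuous $f:\Upsilon\to\mathbb{R}$ with $\{|f|\ge\epsilon\}$ compact for every $\epsilon>0$, with the supremum norm; $\operatorname{supp}f=\{s:f(s)\ne0\}$. The set $t^+$ of immediate successors of $t$ consists of those $u$ with $(0,u)=(0,t]$. The function $\mu$ is increasing. For increasing $\rho$, $t$ is good for $\rho$ if there is a finite $F\subseteq t^+$ with $\inf_{u\in t^+\setminus F}\rho(u)>\rho(t)$ (infimum over the empty set $=+\infty$); otherwise bad. A norm is strictly convex if $\|x\|=\|y\|=\tfrac12\|x+y\|$ implies $x=y$. *)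

theory Defs
  imports "HOL-Analysis.Analysis" "HOL-Library.Extended_Real"
begin

text \<open>A tree is represented by a type 'a (the underlying set of the tree) together with
  its order relation le.  (0,t] = {s. le s t}.\<close>

definition tree_lt :: "('a \<Rightarrow> 'a \<Rightarrow> bool) \<Rightarrow> 'a \<Rightarrow> 'a \<Rightarrow> bool" where
  "tree_lt le s t \<longleftrightarrow> le s t \<and> s \<noteq> t"

definition is_tree :: "('a \<Rightarrow> 'a \<Rightarrow> bool) \<Rightarrow> bool" where
  "is_tree le \<longleftrightarrow>
     (\<forall>x. le x x) \<and> (\<forall>x y. le x y \<and> le y x \<longrightarrow> x = y) \<and>
     (\<forall>x y z. le x y \<and> le y z \<longrightarrow> le x z) \<and>
     \<comment> \<open>each (0,t] is well-ordered: every nonempty subset has a least element\<close>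
     (\<forall>t A. A \<subseteq> {s. le s t} \<and> A \<noteq> {} \<longrightarrow> (\<exists>m\<in>A. \<forall>a\<in>A. le m a))"

text \<open>r(t) is a limit ordinal iff (0,t) is nonempty and has no greatest element.\<close>
definition limit_height :: "('a \<Rightarrow> 'a \<Rightarrow> bool) \<Rightarrow> 'a \<Rightarrow> bool" where
  "limit_height le t \<longleftrightarrow> {s. tree_lt le s t} \<noteq> {} \<and>
     \<not> (\<exists>m. tree_lt le m t \<and> (\<forall>s. tree_lt le s t \<longrightarrow> le s m))"

definition hausdorff_tree :: "('a \<Rightarrow> 'a \<Rightarrow> bool) \<Rightarrow> bool" where
  "hausdorff_tree le \<longleftrightarrow> is_tree le \<and>
     (\<forall>t t'. limit_height le t \<and> {s. tree_lt le s t} = {s. tree_lt le s t'} \<longrightarrow> t = t')"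

definition tree_topology :: "('a \<Rightarrow> 'a \<Rightarrow> bool) \<Rightarrow> 'a topology" where
  "tree_topology le = topology_generated_by
     ((\<lambda>t. {s. le s t}) ` UNIV \<union> (\<lambda>t. - {s. le s t}) ` UNIV)"

definition C0 :: "('a \<Rightarrow> 'a \<Rightarrow> bool) \<Rightarrow> ('a \<Rightarrow> real) set" where
  "C0 le = {f. continuous_map (tree_topology le) euclideanreal f \<and>
              (\<forall>\<epsilon>>0. compactin (tree_topology le) {s. \<bar>f s\<bar> \<ge> \<epsilon>})}"

definition sup_norm :: "('a \<Rightarrow> real) \<Rightarrow> real" where
  "sup_norm f = (SUP s. \<bar>f s\<bar>)"

definition supp :: "('a \<Rightarrow> real) \<Rightarrow> 'a set" where
  "supp f = {s. f s \<noteq> 0}"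

definition equiv_norm_C0 :: "('a \<Rightarrow> 'a \<Rightarrow> bool) \<Rightarrow> (('a \<Rightarrow> real) \<Rightarrow> real) \<Rightarrow> bool" where
  "equiv_norm_C0 le N \<longleftrightarrow>
     (\<forall>f\<in>C0 le. \<forall>g\<in>C0 le. N (\<lambda>s. f s + g s) \<le> N f + N g) \<and>
     (\<forall>f\<in>C0 le. \<forall>c::real. N (\<lambda>s. c * f s) = \<bar>c\<bar> * N f) \<and>
     (\<exists>a b. 0 < a \<and> 0 < b \<and> (\<forall>f\<in>C0 le. a * sup_norm f \<le> N f \<and> N f \<le> b * sup_norm f))"

definition strictly_convex_C0 :: "('a \<Rightarrow> 'a \<Rightarrow> bool) \<Rightarrow> (('a \<Rightarrow> real) \<Rightarrow> real) \<Rightarrow> bool" where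
  "strictly_convex_C0 le N \<longleftrightarrow>
     (\<forall>x\<in>C0 le. \<forall>y\<in>C0 le. N x = N y \<and> N y = N (\<lambda>s. x s + y s) / 2 \<longrightarrow> x = y)"

definition mu_fun :: "('a \<Rightarrow> 'a \<Rightarrow> bool) \<Rightarrow> (('a \<Rightarrow> real) \<Rightarrow> real) \<Rightarrow> 'a \<Rightarrow> real" where
  "mu_fun le N t = Inf {N (\<lambda>u. indicator {s. le s t} u + f' u) | f'.
       f' \<in> C0 le \<and> supp f' \<subseteq> {u. tree_lt le t u}}"

definition succs :: "('a \<Rightarrow> 'a \<Rightarrow> bool) \<Rightarrow> 'a \<Rightarrow> 'a set" where
  "succs le t = {u. {s. tree_lt le s u} = {s. le s t}}"

text \<open>Infimum taken in the extended reals, so that the infimum of the empty set is +\<infinity>.\<close>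
definition good_for :: "('a \<Rightarrow> 'a \<Rightarrow> bool) \<Rightarrow> ('a \<Rightarrow> real) \<Rightarrow> 'a \<Rightarrow> bool" where
  "good_for le \<rho> t \<longleftrightarrow> (\<exists>F. finite F \<and> F \<subseteq> succs le t \<and>
       (INF u\<in>succs le t - F. ereal (\<rho> u)) > ereal (\<rho> t))"

definition bad_for :: "('a \<Rightarrow> 'a \<Rightarrow> bool) \<Rightarrow> ('a \<Rightarrow> real) \<Rightarrow> 'a \<Rightarrow> bool" where
  "bad_for le \<rho> t \<longleftrightarrow> \<not> good_for le \<rho> t"

end

theory Submission
  imports Defs
begin

context
  fixes le :: "'a \<Rightarrow> 'a \<Rightarrow> bool"
  assumes H: "hausdorff_tree le"
begin

lemma tr_T: "is_tree le" using H unfolding hausdorff_tree_def by blast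

lemma tr_refl: "le x x" using tr_T unfolding is_tree_def by blast
lemma tr_antisym: "le x y \<Longrightarrow> le y x \<Longrightarrow> x = y" using tr_T unfolding is_tree_def by blast
lemma tr_trans: "le x y \<Longrightarrow> le y z \<Longrightarrow> le x z" using tr_T unfolding is_tree_def by blast
lemma tr_wo: "A \<subseteq> {s. le s t} \<Longrightarrow> A \<noteq> {} \<Longrightarrow> \<exists>m\<in>A. \<forall>a\<in>A. le m a"
  using tr_T unfolding is_tree_def by blast

lemma tr_haus: "limit_height le t \<Longrightarrow> {s. tree_lt le s t} = {s. tree_lt le s t'} \<Longrightarrow> t = t'"
  using H unfolding hausdorff_tree_def by blast

lemma tr_comp: "le x v \<Longrightarrow> le y v \<Longrightarrow> le x y \<or> le y x"
  using tr_wo[of "{x,y}" v] by auto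

lemma wf_lt: "wfP (tree_lt le)"
proof (rule wfp_eq_minimal[THEN iffD2], intro allI impI)
  fix Q :: "'a set" and x assume "x \<in> Q"
  then obtain m where m: "m \<in> Q \<inter> {s. le s x}" "\<forall>a\<in>Q \<inter> {s. le s x}. le m a"
    using tr_wo[of "Q \<inter> {s. le s x}" x] tr_refl by blast
  show "\<exists>z\<in>Q. \<forall>y. tree_lt le y z \<longrightarrow> y \<notin> Q"
  proof (intro bexI[of _ m] allI impI)
    fix y assume "tree_lt le y m"
    then show "y \<notin> Q" using m tr_trans tr_antisym unfolding tree_lt_def by blast
  qed (use m in auto)
qed

lemma seg: assumes "\<not> (le x x' \<and> le x y)" and sub: "\<And>s. le s x' \<Longrightarrow> le s y \<Longrightarrow> le s x"
  shows "\<exists>a. le a x \<and> \<not> (le a x' \<and> le a y) \<and> {s. tree_lt le s a} = {s. le s x' \<and> le s y}"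
proof -
  obtain a where a: "a \<in> {s. le s x} - {s. le s x' \<and> le s y}"
    "\<forall>b\<in>{s. le s x} - {s. le s x' \<and> le s y}. le a b"
    using tr_wo[of "{s. le s x} - {s. le s x' \<and> le s y}" x] assms(1) tr_refl by blast
  have ax: "le a x" and anI: "\<not> (le a x' \<and> le a y)" using a(1) by auto
  have "{s. tree_lt le s a} = {s. le s x' \<and> le s y}"
  proof (intro set_eqI iffI)
    fix s assume "s \<in> {s. tree_lt le s a}"
    then have s: "le s a" "s \<noteq> a" unfolding tree_lt_def by auto
    have sx: "le s x" using tr_trans[OF s(1) ax] .
    show "s \<in> {s. le s x' \<and> le s y}"
    proof (rule ccontr)
      assume "s \<notin> {s. le s x' \<and> le s y}"
      then have "le a s" using a(2) sx by blast
      then show False using tr_antisym[OF s(1)] s(2) by blast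
    qed
  next
    fix s assume "s \<in> {s. le s x' \<and> le s y}"
    then have sI: "le s x'" "le s y" by auto
    have sx: "le s x" using sub[OF sI] .
    have "le a s \<or> le s a" using tr_comp[OF ax sx] .
    moreover have "\<not> le a s" using sI anI tr_trans by blast
    ultimately have "le s a" by blast
    moreover have "s \<noteq> a" using sI anI by blast
    ultimately show "s \<in> {s. tree_lt le s a}" unfolding tree_lt_def by blast
  qed
  then show ?thesis using ax anI by blast
qed

lemma meet_max: assumes "\<not> le t w" "\<exists>s. le s t \<and> le s w"
  shows "\<exists>p. le p t \<and> le p w \<and> (\<forall>s. le s t \<and> le s w \<longrightarrow> le s p)"
proof (rule ccontr)
  assume nm: "\<not> ?thesis"
  obtain a where a: "le a t" "\<not> (le a t \<and> le a w)" "{s. tree_lt le s a} = {s. le s t \<and> le s w}"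
    using seg[of t t w] assms by blast
  have "\<not> le w t" using nm tr_refl by blast
  then obtain a' where a': "le a' w" "\<not> (le a' t \<and> le a' w)" "{s. tree_lt le s a'} = {s. le s t \<and> le s w}"
    using seg[of w t w] by blast
  have lim: "limit_height le a"
    unfolding limit_height_def
  proof
    show "{s. tree_lt le s a} \<noteq> {}" using a(3) assms(2) by auto
    show "\<not> (\<exists>m. tree_lt le m a \<and> (\<forall>s. tree_lt le s a \<longrightarrow> le s m))"
    proof
      assume "\<exists>m. tree_lt le m a \<and> (\<forall>s. tree_lt le s a \<longrightarrow> le s m)"
      then obtain m where "m \<in> {s. tree_lt le s a}" "\<forall>s\<in>{s. tree_lt le s a}. le s m" by auto
      then have "le m t \<and> le m w" "\<forall>s. le s t \<and> le s w \<longrightarrow> le s m" unfolding a(3) by auto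
      then show False using nm by blast
    qed
  qed
  have "a = a'" using tr_haus[OF lim] a(3) a'(3) by simp
  then show False using a a' by blast
qed


lemma topspace_tt: "topspace (tree_topology le) = UNIV"
  unfolding tree_topology_def topology_generated_by_topspace by auto

lemma open_down: "openin (tree_topology le) {s. le s t}"
  unfolding tree_topology_def by (rule topology_generated_by_Basis) auto

lemma open_compl: "openin (tree_topology le) (- {s. le s t})"
  unfolding tree_topology_def by (rule topology_generated_by_Basis) auto

lemma nbhd:
  assumes "generate_topology_on ((\<lambda>t. {s. le s t}) ` UNIV \<union> (\<lambda>t. - {s. le s t}) ` UNIV) B"
  shows "t \<in> B \<Longrightarrow> {s. le s t} \<subseteq> B \<or> (\<exists>p. tree_lt le p t \<and> {s. le s t \<and> \<not> le s p} \<subseteq> B)"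
  using assms
proof (induction arbitrary: t)
  case Empty
  then show ?case by simp
next
  case (Int a b)
  have Ha: "{s. le s t} \<subseteq> a \<or> (\<exists>p. tree_lt le p t \<and> {s. le s t \<and> \<not> le s p} \<subseteq> a)"
    using Int.IH(1)[of t] Int.prems by blast
  have Hb: "{s. le s t} \<subseteq> b \<or> (\<exists>p. tree_lt le p t \<and> {s. le s t \<and> \<not> le s p} \<subseteq> b)"
    using Int.IH(2)[of t] Int.prems by blast
  from Ha Hb show ?case
  proof (elim disjE exE conjE)
    fix p q assume p: "tree_lt le p t" "{s. le s t \<and> \<not> le s p} \<subseteq> a"
      and q: "tree_lt le q t" "{s. le s t \<and> \<not> le s q} \<subseteq> b"
    have "le p q \<or> le q p" using tr_comp p(1) q(1) unfolding tree_lt_def by blast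
    then show ?thesis
    proof
      assume "le p q"
      then have "{s. le s t \<and> \<not> le s q} \<subseteq> a \<inter> b" using p q tr_trans by blast
      then show ?thesis using q by blast
    next
      assume "le q p"
      then have "{s. le s t \<and> \<not> le s p} \<subseteq> a \<inter> b" using p q tr_trans by blast
      then show ?thesis using p by blast
    qed
  qed blast+
next
  case (UN K)
  then obtain k where "k \<in> K" "t \<in> k" by blast
  then show ?case using UN.IH[of k t] by blast
next
  case (Basis B)
  then consider v where "B = {s. le s v}" | w where "B = - {s. le s w}" by blast
  then show ?case
  proof cases
    case 1
    then show ?thesis using Basis.prems tr_trans by auto
  next
    case 2
    then have nt: "\<not> le t w" using Basis.prems by auto
    show ?thesis
    proof (cases "\<exists>s. le s t \<and> le s w")
      case False
      then show ?thesis using 2 by auto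
    next
      case True
      then obtain p where p: "le p t" "le p w" "\<forall>s. le s t \<and> le s w \<longrightarrow> le s p"
        using meet_max[OF nt] by blast
      have "tree_lt le p t" using p nt unfolding tree_lt_def by auto
      moreover have "{s. le s t \<and> \<not> le s p} \<subseteq> B" using 2 p by auto
      ultimately show ?thesis by blast
    qed
  qed
qed

lemma compact_down: "compactin (tree_topology le) {s. le s t}"
proof (induction t rule: wfp_induct_rule[OF wf_lt])
  case (1 t)
  show ?case unfolding compactin_def topspace_tt
  proof (intro conjI allI impI; (elim conjE)?)
    fix U assume U: "\<forall>B\<in>U. openin (tree_topology le) B" "{s. le s t} \<subseteq> \<Union>U"
    obtain B where B: "B \<in> U" "t \<in> B" using U(2) tr_refl by blast
    have gB: "generate_topology_on ((\<lambda>t. {s. le s t}) ` UNIV \<union> (\<lambda>t. - {s. le s t}) ` UNIV) B"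
      using U(1) B(1) unfolding tree_topology_def by (simp add: openin_topology_generated_by_iff)
    from nbhd[OF gB B(2)] show "\<exists>F. finite F \<and> F \<subseteq> U \<and> {s. le s t} \<subseteq> \<Union>F"
    proof (elim disjE exE conjE)
      assume "{s. le s t} \<subseteq> B"
      then show ?thesis using B by (intro exI[of _ "{B}"]) auto
    next
      fix p assume p: "tree_lt le p t" "{s. le s t \<and> \<not> le s p} \<subseteq> B"
      have "{s. le s p} \<subseteq> \<Union>U" using U(2) p(1) tr_trans unfolding tree_lt_def by blast
      then obtain F where F: "finite F" "F \<subseteq> U" "{s. le s p} \<subseteq> \<Union>F"
        using 1[OF p(1)] U(1) unfolding compactin_def by blast
      show ?thesis using F B p by (intro exI[of _ "insert B F"]) auto
    qed
  qed simp
qed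


lemma cont_ind: "continuous_map (tree_topology le) euclideanreal (indicator {s. le s t} :: 'a \<Rightarrow> real)"
  unfolding continuous_map topspace_tt
proof (intro conjI allI impI)
  fix U :: "real set" assume "openin euclideanreal U"
  have "{x \<in> UNIV. (indicator {s. le s t} x :: real) \<in> U} =
     (if 1 \<in> U then {s. le s t} else {}) \<union> (if 0 \<in> U then - {s. le s t} else {})"
    by (auto simp: indicator_def)
  then show "openin (tree_topology le) {x \<in> UNIV. (indicator {s. le s t} x :: real) \<in> U}"
    using open_down open_compl openin_topspace[of "tree_topology le", unfolded topspace_tt]
    by (auto intro: openin_Un)
qed auto

lemma ind_C0: "(indicator {s. le s t} :: 'a \<Rightarrow> real) \<in> C0 le"
  unfolding C0_def
proof (intro CollectI conjI allI impI cont_ind)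
  fix e :: real assume "e > 0"
  have "{s. e \<le> \<bar>(indicator {s. le s t} s :: real)\<bar>} = (if e \<le> 1 then {s. le s t} else {})"
    using \<open>e > 0\<close> by (auto simp: indicator_def)
  then show "compactin (tree_topology le) {s. e \<le> \<bar>(indicator {s. le s t} s :: real)\<bar>}"
    using compact_down by simp
qed

lemma closed_level: "continuous_map (tree_topology le) euclideanreal f \<Longrightarrow>
   closedin (tree_topology le) {s. e \<le> \<bar>f s\<bar>}"
  using closedin_continuous_map_preimage[of "tree_topology le" euclideanreal f "{y. e \<le> \<bar>y\<bar>}"]
  by (simp add: topspace_tt closed_Collect_le continuous_intros)

lemma C0_add: "f \<in> C0 le \<Longrightarrow> g \<in> C0 le \<Longrightarrow> (\<lambda>s. f s + g s) \<in> C0 le"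
  unfolding C0_def
proof (intro CollectI conjI allI impI; (elim CollectE conjE)?)
  assume f: "continuous_map (tree_topology le) euclideanreal f" "\<forall>e>0. compactin (tree_topology le) {s. e \<le> \<bar>f s\<bar>}"
    and g: "continuous_map (tree_topology le) euclideanreal g" "\<forall>e>0. compactin (tree_topology le) {s. e \<le> \<bar>g s\<bar>}"
  show c: "continuous_map (tree_topology le) euclideanreal (\<lambda>s. f s + g s)"
    using f g by (intro continuous_map_add)
  fix e :: real assume "e > 0"
  have "compactin (tree_topology le) ({s. e/2 \<le> \<bar>f s\<bar>} \<union> {s. e/2 \<le> \<bar>g s\<bar>})"
    using f(2)[rule_format, of "e/2"] g(2)[rule_format, of "e/2"] \<open>e > 0\<close> by (intro compactin_Un) auto
  moreover have "{s. e \<le> \<bar>f s + g s\<bar>} \<subseteq> {s. e/2 \<le> \<bar>f s\<bar>} \<union> {s. e/2 \<le> \<bar>g s\<bar>}"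
    by auto
  ultimately show "compactin (tree_topology le) {s. e \<le> \<bar>f s + g s\<bar>}"
    using closed_level[OF c] closed_compactin by blast
qed

lemma C0_scale: "f \<in> C0 le \<Longrightarrow> (\<lambda>s. c * f s) \<in> C0 le"
  unfolding C0_def
proof (intro CollectI conjI allI impI; (elim CollectE conjE)?)
  assume f: "continuous_map (tree_topology le) euclideanreal f" "\<forall>e>0. compactin (tree_topology le) {s. e \<le> \<bar>f s\<bar>}"
  show c: "continuous_map (tree_topology le) euclideanreal (\<lambda>s. c * f s)"
    using f by (intro continuous_map_real_mult_left)
  fix e :: real assume "e > 0"
  show "compactin (tree_topology le) {s. e \<le> \<bar>c * f s\<bar>}"
  proof (cases "c = 0")
    case True
    then show ?thesis using \<open>e > 0\<close> by simp
  next
    case False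
    then have "{s. e \<le> \<bar>c * f s\<bar>} = {s. e / \<bar>c\<bar> \<le> \<bar>f s\<bar>}"
      by (auto simp: abs_mult field_simps)
    then show ?thesis using f \<open>e > 0\<close> False by simp
  qed
qed

lemma C0_zero: "(\<lambda>s. 0) \<in> C0 le"
  using C0_scale[OF ind_C0, of 0] by simp

lemma C0_diff: "f \<in> C0 le \<Longrightarrow> g \<in> C0 le \<Longrightarrow> (\<lambda>s. f s - g s) \<in> C0 le"
  using C0_add[OF _ C0_scale[of g "-1"], of f] by simp

lemma C0_sum: "finite U \<Longrightarrow> (\<And>u. u \<in> U \<Longrightarrow> y u \<in> C0 le) \<Longrightarrow> (\<lambda>v. \<Sum>u\<in>U. y u v) \<in> C0 le"
proof (induction U rule: finite_induct)
  case empty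
  then show ?case using C0_zero by simp
next
  case (insert x F)
  have yx: "y x \<in> C0 le" using insert.prems by blast
  have yF: "\<And>u. u \<in> F \<Longrightarrow> y u \<in> C0 le" using insert.prems by blast
  have IH: "(\<lambda>v. \<Sum>u\<in>F. y u v) \<in> C0 le" using insert.IH yF by blast
  have "(\<lambda>v. \<Sum>u\<in>insert x F. y u v) = (\<lambda>v. y x v + (\<Sum>u\<in>F. y u v))"
    using insert.hyps by simp
  then show ?case using C0_add[OF yx IH] by simp
qed

lemma C0_bounded: assumes "f \<in> C0 le" shows "\<exists>C. \<forall>s. \<bar>f s\<bar> \<le> C"
proof -
  have c: "continuous_map (tree_topology le) euclideanreal f"
    and k: "compactin (tree_topology le) {s. 1 \<le> \<bar>f s\<bar>}" using assms unfolding C0_def by auto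
  have "compact (f ` {s. 1 \<le> \<bar>f s\<bar>})" using image_compactin[OF k c] by simp
  then obtain B where B: "\<forall>x\<in>f ` {s. 1 \<le> \<bar>f s\<bar>}. norm x \<le> B"
    using compact_imp_bounded bounded_iff by metis
  have "\<bar>f s\<bar> \<le> max 1 B" for s
    using B by (cases "1 \<le> \<bar>f s\<bar>") auto
  then show ?thesis by blast
qed

lemma sup_norm_ge: "f \<in> C0 le \<Longrightarrow> \<bar>f s\<bar> \<le> sup_norm f"
  unfolding sup_norm_def using C0_bounded[of f]
  by (auto intro!: cSUP_upper bdd_aboveI2)


context
  fixes N :: "('a \<Rightarrow> real) \<Rightarrow> real"
  assumes EN: "equiv_norm_C0 le N"
begin

lemma N_add: "f \<in> C0 le \<Longrightarrow> g \<in> C0 le \<Longrightarrow> N (\<lambda>s. f s + g s) \<le> N f + N g"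
  using EN unfolding equiv_norm_C0_def by blast

lemma N_scale: "f \<in> C0 le \<Longrightarrow> N (\<lambda>s. c * f s) = \<bar>c\<bar> * N f"
  using EN unfolding equiv_norm_C0_def by blast

lemma N_equiv: "\<exists>a b. 0 < a \<and> 0 < b \<and> (\<forall>f\<in>C0 le. a * sup_norm f \<le> N f \<and> N f \<le> b * sup_norm f)"
  using EN unfolding equiv_norm_C0_def by blast

lemma N_nonneg: assumes "f \<in> C0 le" shows "0 \<le> N f"
proof -
  obtain a b where ab: "0 < a" "\<forall>f\<in>C0 le. a * sup_norm f \<le> N f" using N_equiv by blast
  have "0 \<le> sup_norm f" using sup_norm_ge[OF assms, of undefined] by linarith
  then show ?thesis using ab assms by (meson order.trans mult_nonneg_nonneg less_imp_le)
qed

lemma N_sum: "finite U \<Longrightarrow> (\<And>u. u \<in> U \<Longrightarrow> y u \<in> C0 le) \<Longrightarrow> N (\<lambda>v. \<Sum>u\<in>U. y u v) \<le> (\<Sum>u\<in>U. N (y u))"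
proof (induction U rule: finite_induct)
  case empty
  have "N (\<lambda>v. 0) = 0" using N_scale[OF C0_zero, of 0] by simp
  then show ?case by simp
next
  case (insert x F)
  have yx: "y x \<in> C0 le" using insert.prems by blast
  have yF: "\<And>u. u \<in> F \<Longrightarrow> y u \<in> C0 le" using insert.prems by blast
  have IH: "N (\<lambda>v. \<Sum>u\<in>F. y u v) \<le> (\<Sum>u\<in>F. N (y u))" using insert.IH yF by blast
  have "N (\<lambda>v. \<Sum>u\<in>insert x F. y u v) = N (\<lambda>v. y x v + (\<Sum>u\<in>F. y u v))"
    using insert.hyps by simp
  also have "\<dots> \<le> N (y x) + N (\<lambda>v. \<Sum>u\<in>F. y u v)"
    by (rule N_add[OF yx C0_sum[OF insert.hyps(1) yF]])
  also have "\<dots> \<le> N (y x) + (\<Sum>u\<in>F. N (y u))" using IH by simp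
  also have "\<dots> = (\<Sum>u\<in>insert x F. N (y u))" using insert.hyps by simp
  finally show ?case .
qed

lemma Mset_ne: "{N (\<lambda>u. indicator {s. le s t} u + f' u) | f'. f' \<in> C0 le \<and> supp f' \<subseteq> {u. tree_lt le t u}} \<noteq> {}"
  using C0_zero by (auto simp: supp_def)

lemma Mset_bdd: "bdd_below {N (\<lambda>u. indicator {s. le s t} u + f' u) | f'. f' \<in> C0 le \<and> supp f' \<subseteq> {u. tree_lt le t u}}"
  by (rule bdd_belowI[of _ 0]) (auto intro!: N_nonneg C0_add ind_C0)

lemma mu_le: "f' \<in> C0 le \<Longrightarrow> supp f' \<subseteq> {u. tree_lt le t u} \<Longrightarrow>
   mu_fun le N t \<le> N (\<lambda>u. indicator {s. le s t} u + f' u)"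
  unfolding mu_fun_def by (rule cInf_lower[OF _ Mset_bdd]) blast

lemma mu_ind: "mu_fun le N t \<le> N (indicator {s. le s t})"
  using mu_le[OF C0_zero, of t] by (simp add: supp_def)

lemma mu_lt: "mu_fun le N t < c \<Longrightarrow> \<exists>f'. f' \<in> C0 le \<and> supp f' \<subseteq> {u. tree_lt le t u} \<and>
   N (\<lambda>u. indicator {s. le s t} u + f' u) < c"
  unfolding mu_fun_def using cInf_lessD[OF Mset_ne] by blast


lemma succ_eq: "u \<in> succs le t \<Longrightarrow> tree_lt le v u \<longleftrightarrow> le v t"
  unfolding succs_def by (metis (mono_tags, lifting) mem_Collect_eq)

lemma succ_lt: "u \<in> succs le t \<Longrightarrow> le t u \<and> t \<noteq> u"
  using succ_eq[of u t t] tr_refl unfolding tree_lt_def by blast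

lemma succ_ind: "u \<in> succs le t \<Longrightarrow> le v u \<longleftrightarrow> le v t \<or> v = u"
  using succ_eq[of u t v] tr_refl unfolding tree_lt_def by blast

lemma succ_disj: assumes "u \<in> succs le t" "u' \<in> succs le t" "le u v" "le u' v" shows "u = u'"
proof -
  have "le u u' \<or> le u' u" using tr_comp assms by blast
  then show ?thesis
  proof
    assume "le u u'"
    show ?thesis
    proof (rule ccontr)
      assume "u \<noteq> u'"
      then have "le u t" using succ_eq[OF assms(2), of u] \<open>le u u'\<close> unfolding tree_lt_def by blast
      then show False using succ_lt[OF assms(1)] tr_antisym by blast
    qed
  next
    assume "le u' u"
    show ?thesis
    proof (rule ccontr)
      assume "u \<noteq> u'"
      then have "le u' t" using succ_eq[OF assms(1), of u'] \<open>le u' u\<close> unfolding tree_lt_def by blast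
      then show False using succ_lt[OF assms(2)] tr_antisym by blast
    qed
  qed
qed

lemma bad_attained:
  assumes bad: "bad_for le (mu_fun le N) t"
  shows "N (indicator {s. le s t}) \<le> mu_fun le N t"
proof (rule ccontr)
  define x where "x = (indicator {s. le s t} :: 'a \<Rightarrow> real)"
  define m where "m = mu_fun le N t"
  assume "\<not> ?thesis"
  then have gt: "m < N x" unfolding x_def m_def by simp
  define \<delta> where "\<delta> = (N x - m) / 4"
  have d: "\<delta> > 0" using gt by (simp add: \<delta>_def)
  define S where "S = {u \<in> succs le t. mu_fun le N u < m + \<delta>}"
  have infS: "infinite S"
  proof
    assume fin: "finite S"
    have "ereal m < ereal (m + \<delta>)" using d by simp
    also have "ereal (m + \<delta>) \<le> (INF u\<in>succs le t - S. ereal (mu_fun le N u))"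
      by (rule INF_greatest) (auto simp: S_def)
    finally have "good_for le (mu_fun le N) t" unfolding good_for_def using fin
      by (intro exI[of _ S]) (auto simp: S_def m_def)
    then show False using bad unfolding bad_for_def by blast
  qed
  obtain a b where ab: "0 < a" "0 < b" "\<forall>f\<in>C0 le. a * sup_norm f \<le> N f \<and> N f \<le> b * sup_norm f"
    using N_equiv by blast
  define C where "C = (m + \<delta> + N x) / a"
  obtain n :: nat where n: "b * C / \<delta> < n" using reals_Archimedean2 by blast
  define k where "k = Suc n"
  have kpos: "k > 0" by (simp add: k_def)
  have "b * C < n * \<delta>" using n d by (simp add: divide_less_eq)
  also have "\<dots> \<le> k * \<delta>" using d by (simp add: k_def)
  finally have kC: "b * C / k < \<delta>" using kpos by (simp add: divide_less_eq mult.commute)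
  obtain U where U: "finite U" "card U = k" "U \<subseteq> S"
    using infinite_arbitrarily_large[OF infS] by blast
  have "\<forall>u\<in>U. \<exists>f. f \<in> C0 le \<and> supp f \<subseteq> {v. tree_lt le u v} \<and>
      N (\<lambda>v. indicator {s. le s u} v + f v) < m + \<delta>"
    using mu_lt U(3) by (auto simp: S_def)
  from bchoice[OF this] obtain F where F: "\<forall>u\<in>U. F u \<in> C0 le \<and> supp (F u) \<subseteq> {v. tree_lt le u v} \<and>
      N (\<lambda>v. indicator {s. le s u} v + F u v) < m + \<delta>"
    by blast
  define y where "y u = (\<lambda>v. indicator {s. le s u} v + F u v)" for u
  define g where "g u = (\<lambda>v. y u v - x v)" for u
  define z where "z = (\<lambda>v. (1 / real k) * (\<Sum>u\<in>U. y u v))"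
  define h where "h = (\<lambda>v. x v - z v)"
  have xC0: "x \<in> C0 le" unfolding x_def by (rule ind_C0)
  have yC0: "y u \<in> C0 le" if "u \<in> U" for u
    unfolding y_def using F that ind_C0 C0_add by blast
  have gC0: "g u \<in> C0 le" if "u \<in> U" for u
    unfolding g_def using yC0[OF that] xC0 by (rule C0_diff)
  have zC0: "z \<in> C0 le" unfolding z_def by (rule C0_scale[OF C0_sum[OF U(1) yC0]])
  have hC0: "h \<in> C0 le" unfolding h_def using xC0 zC0 by (rule C0_diff)
  have Ny: "N (y u) < m + \<delta>" if "u \<in> U" for u using F that unfolding y_def by blast
  have "N z = (1 / real k) * N (\<lambda>v. \<Sum>u\<in>U. y u v)"
    unfolding z_def using N_scale[OF C0_sum[OF U(1) yC0], where c="1 / real k"] by simp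
  also have "\<dots> \<le> (1 / real k) * (\<Sum>u\<in>U. N (y u))"
    using N_sum[OF U(1) yC0] by (intro mult_left_mono) auto
  also have "\<dots> \<le> (1 / real k) * (\<Sum>u\<in>U. (m + \<delta>))"
    using Ny by (intro mult_left_mono sum_mono) (auto intro: less_imp_le)
  also have "\<dots> = m + \<delta>" using U(2) kpos by simp
  finally have Nz: "N z \<le> m + \<delta>" .
  have "x = (\<lambda>s. z s + h s)" by (simp add: h_def)
  then have Nx: "N x \<le> N z + N h" using N_add[OF zC0 hC0] by simp
  have gbound: "\<bar>g u v\<bar> \<le> C" if "u \<in> U" for u v
  proof -
    have "N (g u) = N (\<lambda>s. y u s + (-1) * x s)" unfolding g_def by simp
    also have "\<dots> \<le> N (y u) + N (\<lambda>s. (-1) * x s)"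
      by (rule N_add[OF yC0[OF that] C0_scale[OF xC0]])
    also have "\<dots> = N (y u) + N x" using N_scale[OF xC0, where c="-1"] by simp
    finally have "N (g u) \<le> m + \<delta> + N x" using Ny[OF that] by simp
    moreover have "a * sup_norm (g u) \<le> N (g u)" using ab(3) gC0[OF that] by blast
    ultimately have "a * sup_norm (g u) \<le> m + \<delta> + N x" by linarith
    then have "sup_norm (g u) \<le> C" unfolding C_def using ab(1) by (simp add: pos_le_divide_eq mult.commute)
    then show ?thesis using sup_norm_ge[OF gC0[OF that], of v] by linarith
  qed
  have gsupp: "le u v" if "u \<in> U" "g u v \<noteq> 0" for u v
  proof (rule ccontr)
    assume nuv: "\<not> le u v"
    have us: "u \<in> succs le t" using that U(3) by (auto simp: S_def)
    have "F u v = 0" using F that(1) nuv unfolding supp_def tree_lt_def by blast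
    moreover have "le v u \<longleftrightarrow> le v t" using succ_ind[OF us, of v] nuv tr_refl by blast
    ultimately have "g u v = 0" unfolding g_def y_def x_def by (simp add: indicator_def)
    then show False using that by simp
  qed
  have sumg: "\<bar>\<Sum>u\<in>U. g u v\<bar> \<le> C" for v
  proof (cases "\<exists>u0\<in>U. g u0 v \<noteq> 0")
    case True
    then obtain u0 where u0: "u0 \<in> U" "g u0 v \<noteq> 0" by blast
    have "\<forall>u\<in>U - {u0}. g u v = 0"
    proof
      fix u assume u: "u \<in> U - {u0}"
      show "g u v = 0"
      proof (rule ccontr)
        assume "g u v \<noteq> 0"
        then have "u = u0" using succ_disj[of u t u0 v] gsupp u u0 U(3) by (auto simp: S_def)
        then show False using u by simp
      qed
    qed
    then have "(\<Sum>u\<in>U. g u v) = g u0 v"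
      using sum.remove[OF U(1) u0(1), of "\<lambda>u. g u v"] by simp
    then show ?thesis using gbound[OF u0(1)] by simp
  next
    case False
    obtain u1 where "u1 \<in> U" using U(2) kpos by (metis card.empty equals0I less_irrefl)
    then show ?thesis using False gbound[of u1 v] by simp
  qed
  have hv: "\<bar>h v\<bar> \<le> C / real k" for v
  proof -
    have "(\<Sum>u\<in>U. g u v) = (\<Sum>u\<in>U. y u v) - real k * x v"
      unfolding g_def using U(2) by (simp add: sum_subtractf)
    then have E: "(\<Sum>u\<in>U. y u v) = (\<Sum>u\<in>U. g u v) + real k * x v" by simp
    have "h v = x v - (1 / real k) * (\<Sum>u\<in>U. y u v)" by (simp add: h_def z_def)
    also have "\<dots> = x v - (1 / real k) * ((\<Sum>u\<in>U. g u v) + real k * x v)" using E by simp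
    also have "\<dots> = - (1 / real k) * (\<Sum>u\<in>U. g u v)" using kpos by (simp add: field_simps)
    finally have "h v = - (1 / real k) * (\<Sum>u\<in>U. g u v)" .
    then have "\<bar>h v\<bar> = (1 / real k) * \<bar>\<Sum>u\<in>U. g u v\<bar>" by (simp add: abs_mult)
    also have "\<dots> \<le> (1 / real k) * C" using sumg by (intro mult_left_mono) auto
    finally show ?thesis by simp
  qed
  have "sup_norm h \<le> C / real k" unfolding sup_norm_def by (rule cSUP_least) (auto simp: hv)
  then have "N h \<le> b * (C / real k)" using ab hC0 by (meson order.trans mult_left_mono less_imp_le)
  then have A1: "N x \<le> m + \<delta> + b * C / real k" using Nx Nz by simp
  have A2: "m + 2 * \<delta> < N x" using gt unfolding \<delta>_def by (simp add: field_simps)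
  show False using A1 A2 kC by linarith
qed

end

end

theorem proposition3p3:
  fixes le :: "'a \<Rightarrow> 'a \<Rightarrow> bool" and N :: "('a \<Rightarrow> real) \<Rightarrow> real"
  assumes "hausdorff_tree le"
    and "equiv_norm_C0 le N"
    and "strictly_convex_C0 le N"
  shows "(\<forall>s t t'. bad_for le (mu_fun le N) t \<and> le s t \<and> mu_fun le N t = mu_fun le N s \<and>
                   bad_for le (mu_fun le N) t' \<and> le s t' \<and> mu_fun le N t' = mu_fun le N s
                   \<longrightarrow> t = t') \<and>
         (\<forall>s t. bad_for le (mu_fun le N) s \<and> bad_for le (mu_fun le N) t \<and> tree_lt le s t
                   \<longrightarrow> mu_fun le N s < mu_fun le N t)"
proof -
  note H = assms(1) and EN = assms(2) and SC = assms(3)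
  have P1: "\<forall>s t t'. bad_for le (mu_fun le N) t \<and> le s t \<and> mu_fun le N t = mu_fun le N s \<and>
                   bad_for le (mu_fun le N) t' \<and> le s t' \<and> mu_fun le N t' = mu_fun le N s
                   \<longrightarrow> t = t'"
  proof (intro allI impI, elim conjE)
    fix s t t'
    assume bt: "bad_for le (mu_fun le N) t" and st: "le s t" and mt: "mu_fun le N t = mu_fun le N s"
      and bt': "bad_for le (mu_fun le N) t'" and st': "le s t'" and mt': "mu_fun le N t' = mu_fun le N s"
    define x where "x = (indicator {v. le v t} :: 'a \<Rightarrow> real)"
    define y where "y = (indicator {v. le v t'} :: 'a \<Rightarrow> real)"
    have xC0: "x \<in> C0 le" unfolding x_def by (rule ind_C0[OF H])
    have yC0: "y \<in> C0 le" unfolding y_def by (rule ind_C0[OF H])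
    have Nx: "N x = mu_fun le N s"
      using bad_attained[OF H EN bt] mu_ind[OF H EN, of t] mt unfolding x_def by linarith
    have Ny: "N y = mu_fun le N s"
      using bad_attained[OF H EN bt'] mu_ind[OF H EN, of t'] mt' unfolding y_def by linarith
    define f' where "f' = (\<lambda>v. (1/2) * (x v + y v) - indicator {w. le w s} v)"
    have f'C0: "f' \<in> C0 le" unfolding f'_def
      by (rule C0_diff[OF H C0_scale[OF H C0_add[OF H xC0 yC0]] ind_C0[OF H]])
    have f'supp: "supp f' \<subseteq> {u. tree_lt le s u}"
    proof
      fix v assume "v \<in> supp f'"
      then have fv: "f' v \<noteq> 0" unfolding supp_def by simp
      have nvs: "\<not> le v s"
      proof
        assume "le v s"
        then have "le v t" "le v t'" using tr_trans[OF H] st st' by blast+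
        then have "f' v = 0" using \<open>le v s\<close> unfolding f'_def x_def y_def by simp
        then show False using fv by simp
      qed
      then have "x v \<noteq> 0 \<or> y v \<noteq> 0" using fv unfolding f'_def by auto
      then have "le v t \<or> le v t'" unfolding x_def y_def by (auto simp: indicator_def split: if_splits)
      then have "le s v \<or> le v s" using tr_comp[OF H] st st' by blast
      then have "le s v" using nvs by blast
      moreover have "s \<noteq> v" using nvs tr_refl[OF H] by blast
      ultimately show "v \<in> {u. tree_lt le s u}" unfolding tree_lt_def by simp
    qed
    have eq: "(\<lambda>u. indicator {w. le w s} u + f' u) = (\<lambda>u. (1/2) * (x u + y u))"
      unfolding f'_def by simp
    have "mu_fun le N s \<le> N (\<lambda>u. (1/2) * (x u + y u))"
      using mu_le[OF H EN f'C0 f'supp] unfolding eq .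
    also have "\<dots> = (1/2) * N (\<lambda>u. x u + y u)"
      using N_scale[OF H EN C0_add[OF H xC0 yC0], where c="1/2"] by simp
    finally have lo: "mu_fun le N s \<le> (1/2) * N (\<lambda>u. x u + y u)" .
    have hi: "N (\<lambda>u. x u + y u) \<le> N x + N y" by (rule N_add[OF H EN xC0 yC0])
    have "N x = N y \<and> N y = N (\<lambda>u. x u + y u) / 2" using lo hi Nx Ny by linarith
    then have "x = y" using SC xC0 yC0 unfolding strictly_convex_C0_def by blast
    then have "x t = y t" "x t' = y t'" by simp_all
    then have "le t t'" "le t' t" unfolding x_def y_def using tr_refl[OF H]
      by (auto simp: indicator_def split: if_splits)
    then show "t = t'" using tr_antisym[OF H] by blast
  qed
  have P2: "\<forall>s t. bad_for le (mu_fun le N) s \<and> bad_for le (mu_fun le N) t \<and> tree_lt le s t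
                   \<longrightarrow> mu_fun le N s < mu_fun le N t"
  proof (intro allI impI, elim conjE)
    fix s t
    assume bs: "bad_for le (mu_fun le N) s" and bt: "bad_for le (mu_fun le N) t" and lt: "tree_lt le s t"
    define f' where "f' = (\<lambda>v. (indicator {w. le w t} v :: real) - indicator {w. le w s} v)"
    have f'C0: "f' \<in> C0 le" unfolding f'_def by (rule C0_diff[OF H ind_C0[OF H] ind_C0[OF H]])
    have st: "le s t" using lt unfolding tree_lt_def by simp
    have f'supp: "supp f' \<subseteq> {u. tree_lt le s u}"
    proof
      fix v assume "v \<in> supp f'"
      then have fv: "f' v \<noteq> 0" unfolding supp_def by simp
      have nvs: "\<not> le v s"
      proof
        assume "le v s"
        then have "le v t" using tr_trans[OF H] st by blast
        then have "f' v = 0" using \<open>le v s\<close> unfolding f'_def by simp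
        then show False using fv by simp
      qed
      then have "le v t" using fv unfolding f'_def by (auto simp: indicator_def split: if_splits)
      then have "le s v \<or> le v s" using tr_comp[OF H] st by blast
      then have "le s v" using nvs by blast
      moreover have "s \<noteq> v" using nvs tr_refl[OF H] by blast
      ultimately show "v \<in> {u. tree_lt le s u}" unfolding tree_lt_def by simp
    qed
    have eq: "(\<lambda>u. indicator {w. le w s} u + f' u) = (indicator {w. le w t} :: 'a \<Rightarrow> real)"
      unfolding f'_def by (rule ext) simp
    have "mu_fun le N s \<le> N (indicator {w. le w t})"
      using mu_le[OF H EN f'C0 f'supp] unfolding eq .
    also have "\<dots> \<le> mu_fun le N t" by (rule bad_attained[OF H EN bt])
    finally have le1: "mu_fun le N s \<le> mu_fun le N t" .
    have "mu_fun le N s \<noteq> mu_fun le N t"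
    proof
      assume e: "mu_fun le N s = mu_fun le N t"
      have "s = t" using P1 bs bt st tr_refl[OF H, of s] e by metis
      then show False using lt unfolding tree_lt_def by simp
    qed
    then show "mu_fun le N s < mu_fun le N t" using le1 by simp
  qed
  show ?thesis using P1 P2 by blast
qed

end
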